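(* Let $q$ be a prime power, $\mathbb{L}=\mathrm{GF}(q^m)$, $n\mid q^m-1$, and $F_n=\{f\in\mathbb{L}^n : f_{qi\bmod n}=f_i^q\ \forall i\in\mathbb{Z}/n\mathbb{Z}\}$. For $g\in\mathbb{L}^n$ and each $q$-cyclotomic class $C=\{c,qc,\ldots,q^{|C|-1}c\}$ modulo $n$ (with chosen leader $c$), put $x_{C,t}=(g_{q^tc})^{q^{m-t}}$ for $t=0,\ldots,|C|-1$. Then $$\min_{f\in F_n}|\mathrm{supp}(g-f)|=\sum_{C}\Big(|C|-\max_{b\in\mathrm{GF}(q^{|C|})}\#\{t : x_{C,t}=b\}\Big),$$ the sum running over all $q$-cyclotomic classes modulo $n$.
   Context: $\mathrm{supp}(h)=\{i : h_i\neq0\}$. The $q$-cyclotomic class of $s\in\mathbb{Z}/n\mathbb{Z}$ is $\{s,qs,q^2s,\ldots\}\bmod n$. $\mathrm{GF}(q^\ell)$ for $\ell\mid m$ is the unique subfield of $\mathbb{L}$ of that size. *)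

theory Defs
  imports "HOL-Number_Theory.Number_Theory"
begin

text \<open>Vectors in L^n are functions nat \<Rightarrow> 'a, indexed by {0..<n} (representing Z/nZ),
  and set to 0 outside this range.\<close>

definition Fn :: "nat \<Rightarrow> nat \<Rightarrow> (nat \<Rightarrow> 'a::field) set" where
  "Fn q n = {f. (\<forall>i<n. f ((q * i) mod n) = f i ^ q) \<and> (\<forall>i\<ge>n. f i = 0)}"

definition supp_card :: "nat \<Rightarrow> (nat \<Rightarrow> 'a::zero) \<Rightarrow> nat" where
  "supp_card n h = card {i. i < n \<and> h i \<noteq> 0}"

definition cyc_class :: "nat \<Rightarrow> nat \<Rightarrow> nat \<Rightarrow> nat set" where
  "cyc_class q n s = {(q ^ j * s) mod n | j. True}"

definition cyc_classes :: "nat \<Rightarrow> nat \<Rightarrow> nat set set" where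
  "cyc_classes q n = {cyc_class q n c | c. c < n}"

definition subfield_GF :: "nat \<Rightarrow> nat \<Rightarrow> 'a::field set" where
  "subfield_GF q l = {b. b ^ (q ^ l) = b}"

definition xCt :: "nat \<Rightarrow> nat \<Rightarrow> nat \<Rightarrow> (nat \<Rightarrow> 'a::field) \<Rightarrow> nat \<Rightarrow> nat \<Rightarrow> 'a" where
  "xCt q m n g c t = (g ((q ^ t * c) mod n)) ^ (q ^ (m - t))"

end

theory Submission
  imports Defs
begin

lemma fin_field_pow_card:
  fixes x :: "'a::{finite,field}"
  shows "x ^ card (UNIV::'a set) = x"
proof (cases "x = 0")
  case True
  have "card (UNIV::'a set) > 0" by (simp add: finite_UNIV_card_ge_0)
  then show ?thesis using True by (simp add: power_0_left)
next
  case False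
  define U where "U = UNIV - {0::'a}"
  have finU: "finite U" by simp
  have inj: "inj_on (\<lambda>y. x * y) U" using False by (auto simp: inj_on_def)
  have img: "(\<lambda>y. x * y) ` U = U"
  proof
    show "(\<lambda>y. x * y) ` U \<subseteq> U" using False by (auto simp: U_def)
    show "U \<subseteq> (\<lambda>y. x * y) ` U"
    proof
      fix y assume "y \<in> U"
      then have "y / x \<in> U" "y = x * (y / x)" using False by (auto simp: U_def)
      then show "y \<in> (\<lambda>y. x * y) ` U" by blast
    qed
  qed
  have "prod (\<lambda>y. x * y) U = prod id ((\<lambda>y. x * y) ` U)"
    using prod.reindex[OF inj, of id] by simp
  also have "\<dots> = prod id U" using img by simp
  finally have e: "x ^ card U * prod id U = prod id U"
    by (simp add: prod.distrib)
  have "prod id U \<noteq> 0" using finU by (simp add: U_def)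
  then have x1: "x ^ card U = 1" using e by simp
  have cU: "card U = card (UNIV::'a set) - 1" by (simp add: U_def card_Diff_singleton)
  have "card (UNIV::'a set) > 0" by (simp add: finite_UNIV_card_ge_0)
  then have "card (UNIV::'a set) = Suc (card U)" using cU by simp
  then show ?thesis using x1 by simp
qed

locale cycsetup =
  fixes q n m :: nat
  assumes n_pos: "n > 0" and m_pos: "m > 0" and cop: "coprime q n" and qm: "[q ^ m = 1] (mod n)"
begin

definition s where "s c t = (q ^ t * c) mod n"
definition per where "per c = (LEAST k. 0 < k \<and> s c k = s c 0)"

lemma s_lt: "s c t < n" using n_pos by (simp add: s_def)

lemma s_Suc: "s c (Suc t) = (q * s c t) mod n"
  by (simp add: s_def mod_mult_right_eq mult.assoc)

lemma s_0: "c < n \<Longrightarrow> s c 0 = c" by (simp add: s_def)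

lemma s_shift: "(q ^ a * s c j) mod n = s c (a + j)"
  by (simp add: s_def mod_mult_right_eq mult.assoc power_add)

lemma s_m: "s c m = s c 0"
proof -
  have "[q ^ m * c = 1 * c] (mod n)" using qm by (rule cong_mult) simp
  then show ?thesis by (simp add: s_def cong_def)
qed

lemma per: "0 < per c" "s c (per c) = s c 0" "per c \<le> m"
proof -
  have ex: "0 < m \<and> s c m = s c 0" using m_pos s_m by simp
  have "0 < per c \<and> s c (per c) = s c 0" unfolding per_def by (rule LeastI, rule ex)
  then show "0 < per c" "s c (per c) = s c 0" by auto
  show "per c \<le> m" unfolding per_def by (rule Least_le, rule ex)
qed

lemma per_min: "0 < d \<Longrightarrow> d < per c \<Longrightarrow> s c d \<noteq> s c 0"
  unfolding per_def using not_less_Least by blast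

lemma s_period: "s c (a + per c) = s c a"
proof -
  have "s c (a + per c) = (q ^ a * s c (per c)) mod n" by (simp add: s_shift add.commute)
  also have "\<dots> = (q ^ a * s c 0) mod n" using per(2) by simp
  also have "\<dots> = s c a" by (simp add: s_shift)
  finally show ?thesis .
qed

lemma s_period_mult: "s c (a + j * per c) = s c a"
proof (induction j)
  case 0 then show ?case by simp
next
  case (Suc j)
  have "s c (a + Suc j * per c) = s c ((a + j * per c) + per c)" by (simp add: algebra_simps)
  also have "\<dots> = s c a" using s_period Suc by simp
  finally show ?case .
qed

lemma s_mod: "s c a = s c (a mod per c)"
proof -
  have "a = a mod per c + (a div per c) * per c" by simp
  then have "s c a = s c (a mod per c + (a div per c) * per c)" by simp
  also have "\<dots> = s c (a mod per c)" by (rule s_period_mult)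
  finally show ?thesis .
qed

lemma s_cancel: assumes "a \<le> b" "s c a = s c b" shows "s c (b - a) = s c 0"
proof -
  have qb: "q ^ b = q ^ a * q ^ (b - a)" using assms(1) by (simp flip: power_add)
  have "[q ^ a * c = q ^ a * (q ^ (b - a) * c)] (mod n)"
    using assms(2) by (simp add: s_def cong_def qb mult.assoc)
  moreover have "coprime (q ^ a) n" using cop by simp
  ultimately have "[c = q ^ (b - a) * c] (mod n)" using cong_mult_lcancel_nat by blast
  then show ?thesis by (simp add: s_def cong_def)
qed

lemma s_eq_iff: "s c a = s c b \<longleftrightarrow> a mod per c = b mod per c"
proof
  assume "a mod per c = b mod per c"
  then show "s c a = s c b" using s_mod[of c a] s_mod[of c b] by simp
next
  have aux: "a mod per c = b mod per c" if "a \<le> b" "s c a = s c b" for a b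
  proof -
    define d where "d = (b - a) mod per c"
    have "s c d = s c 0" using s_cancel[OF that] s_mod[of c "b - a"] by (simp add: d_def)
    moreover have "d < per c" using per(1) by (simp add: d_def)
    ultimately have "d = 0" using per_min by (cases "d = 0") auto
    then have "per c dvd b - a" by (simp add: d_def mod_eq_0_iff_dvd)
    then show ?thesis using mod_eq_dvd_iff_nat[OF that(1), of "per c"] by simp
  qed
  assume e: "s c a = s c b"
  show "a mod per c = b mod per c"
  proof (cases "a \<le> b")
    case True
    show ?thesis using aux[OF True e] by simp
  next
    case False
    then have "b \<le> a" by simp
    show ?thesis using aux[OF \<open>b \<le> a\<close> e[symmetric]] by simp
  qed
qed

lemma class_eq: "cyc_class q n c = s c ` {..<per c}"
proof
  show "cyc_class q n c \<subseteq> s c ` {..<per c}"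
  proof
    fix i assume "i \<in> cyc_class q n c"
    then obtain j where "i = s c j" by (auto simp: cyc_class_def s_def)
    then have "i = s c (j mod per c)" using s_mod by simp
    moreover have "j mod per c < per c" using per(1) by simp
    ultimately show "i \<in> s c ` {..<per c}" by blast
  qed
  show "s c ` {..<per c} \<subseteq> cyc_class q n c" by (auto simp: cyc_class_def s_def)
qed

lemma inj_s: "inj_on (s c) {..<per c}"
  by (auto simp: inj_on_def s_eq_iff)

lemma card_class: "card (cyc_class q n c) = per c"
  using class_eq inj_s by (simp add: card_image)

lemma class_lt: "i \<in> cyc_class q n c \<Longrightarrow> i < n"
  using n_pos by (auto simp: cyc_class_def)

lemma self_in: "c < n \<Longrightarrow> c \<in> cyc_class q n c"
proof -
  assume "c < n"
  then have "c = (q ^ 0 * c) mod n" by simp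
  then show ?thesis unfolding cyc_class_def by blast
qed

lemma mem_class: assumes "i \<in> cyc_class q n c" shows "cyc_class q n i = cyc_class q n c"
proof -
  obtain j where ij: "i = s c j" using assms by (auto simp: cyc_class_def s_def)
  have "cyc_class q n i = {s c (a + j) | a. True}"
    unfolding cyc_class_def ij by (simp add: s_shift)
  also have "\<dots> = {s c a | a. True}"
  proof
    show "{s c (a + j) | a. True} \<subseteq> {s c a | a. True}" by blast
    show "{s c a | a. True} \<subseteq> {s c (a + j) | a. True}"
    proof
      fix x assume "x \<in> {s c a | a. True}"
      then obtain a where xa: "x = s c a" by blast
      have jj: "j \<le> j * per c" using per(1)[of c] by simp
      have "a + j * per c = (a + j * per c - j) + j" using jj by linarith
      then have "x = s c ((a + j * per c - j) + j)" using xa s_period_mult[of c a j] by simp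
      then show "x \<in> {s c (a + j) | a. True}" by blast
    qed
  qed
  also have "\<dots> = cyc_class q n c" by (simp add: cyc_class_def s_def)
  finally show ?thesis .
qed

lemma Fn_s: assumes "f \<in> Fn q n" "c < n" shows "f (s c t) = f c ^ (q ^ t)"
proof (induction t)
  case 0 then show ?case using assms(2) by (simp add: s_0)
next
  case (Suc t)
  have "f (s c (Suc t)) = f (s c t) ^ q"
    using assms(1) s_lt[of c t] by (simp add: s_Suc Fn_def)
  also have "\<dots> = f c ^ (q ^ t * q)" using Suc by (simp add: power_mult)
  finally show ?case by (simp add: mult.commute)
qed

lemma Fn_sub: assumes "f \<in> Fn q n" "c < n" shows "f c \<in> subfield_GF q (per c)"
  using Fn_s[OF assms, of "per c"] per(2)[of c] Fn_s[OF assms, of 0]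
  by (simp add: subfield_GF_def)

lemma count_if: "(\<Sum>t<k. if P t then 1 else (0::nat)) = card {t. t < k \<and> P t}"
  for k :: nat
proof -
  have "{t. t < k \<and> P t} = {t\<in>{..<k}. P t}" by auto
  then show ?thesis using sum.inter_filter[OF finite_lessThan[of k], of "\<lambda>_. (1::nat)" P] by (simp add: eq_commute)
qed

lemma count_compl: "card {t. t < k \<and> \<not> P t} = k - card {t. t < k \<and> P t}"
  for k :: nat
proof -
  have "{t. t < k \<and> \<not> P t} = {..<k} - {t. t < k \<and> P t}" by auto
  moreover have "{t. t < k \<and> P t} \<subseteq> {..<k}" by auto
  ultimately show ?thesis by (simp add: card_Diff_subset)
qed

lemma class_sum:
  fixes g f :: "nat \<Rightarrow> 'a::field" and a :: 'a
  assumes frob: "\<forall>x::'a. x ^ (q ^ m) = x" and fs: "\<forall>t. f (s c t) = a ^ (q ^ t)"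
  shows "(\<Sum>i\<in>cyc_class q n c. if g i - f i \<noteq> 0 then 1 else (0::nat))
     = per c - card {t. t < per c \<and> xCt q m n g c t = a}"
proof -
  have "(\<Sum>i\<in>cyc_class q n c. if g i - f i \<noteq> 0 then 1 else (0::nat))
      = (\<Sum>t<per c. if g (s c t) - f (s c t) \<noteq> 0 then 1 else 0)"
    using sum.reindex[OF inj_s, of "\<lambda>i. if g i - f i \<noteq> 0 then 1 else (0::nat)"] class_eq[of c]
    by simp
  also have "\<dots> = (\<Sum>t<per c. if \<not> (xCt q m n g c t = a) then 1 else 0)"
  proof (rule sum.cong[OF refl])
    fix t assume "t \<in> {..<per c}"
    then have tm: "t \<le> m" using per(3)[of c] by simp
    have x: "xCt q m n g c t = g (s c t) ^ (q ^ (m - t))" by (simp add: xCt_def s_def)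
    have qq: "q ^ t * q ^ (m - t) = q ^ m" using tm by (simp flip: power_add)
    have pp1: "((y::'a) ^ (q ^ t)) ^ (q ^ (m - t)) = y" for y
      using frob qq by (metis power_mult)
    have pp2: "((y::'a) ^ (q ^ (m - t))) ^ (q ^ t) = y" for y
      using frob qq by (metis power_mult mult.commute)
    have "g (s c t) = a ^ (q ^ t) \<longleftrightarrow> xCt q m n g c t = a" using pp1 pp2 x by metis
    then show "(if g (s c t) - f (s c t) \<noteq> 0 then 1 else (0::nat))
       = (if \<not> (xCt q m n g c t = a) then 1 else 0)" using fs by simp
  qed
  also have "\<dots> = card {t. t < per c \<and> \<not> (xCt q m n g c t = a)}" by (rule count_if)
  also have "\<dots> = per c - card {t. t < per c \<and> xCt q m n g c t = a}" by (rule count_compl)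
  finally show ?thesis .
qed

end

theorem theorem9p4:
  fixes q m n :: nat and g :: "nat \<Rightarrow> 'a::{finite,field}" and lead :: "nat set \<Rightarrow> nat"
  assumes "primepow q" and "m > 0" and "card (UNIV :: 'a set) = q ^ m" and "n dvd q ^ m - 1"
    and "\<forall>i\<ge>n. g i = 0"
    and "\<forall>C\<in>cyc_classes q n. lead C \<in> C"
  shows "Min ((\<lambda>f. supp_card n (\<lambda>i. g i - f i)) ` Fn q n) =
    (\<Sum>C\<in>cyc_classes q n. card C -
       Max ((\<lambda>b. card {t. t < card C \<and> xCt q m n g (lead C) t = b}) ` subfield_GF q (card C)))"
proof -
  have q1: "q > 1" using primepow_gt_Suc_0[OF assms(1)] by simp
  have qm1: "q ^ m > 1" using q1 assms(2) by (metis one_less_power)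
  have npos: "n > 0"
  proof (rule ccontr)
    assume "\<not> n > 0"
    then have "q ^ m - 1 = 0" using assms(4) by simp
    then show False using qm1 by simp
  qed
  have qmc: "[q ^ m = 1] (mod n)" using assms(4) qm1 by (simp add: cong_altdef_nat)
  have "coprime (q ^ m) n"
    using cong_imp_coprime[OF cong_sym[OF qmc]] by simp
  then have cop: "coprime q n" using assms(2) by simp
  interpret cycsetup q n m using npos assms(2) cop qmc by unfold_locales
  have frob: "\<forall>x::'a. x ^ (q ^ m) = x" using fin_field_pow_card assms(3) by metis
  define cls where "cls = cyc_classes q n"
  have cls_eq: "cls = cyc_class q n ` {..<n}" by (auto simp: cls_def cyc_classes_def)
  have fincls: "finite cls" using cls_eq by simp
  have leadC: "lead C < n \<and> cyc_class q n (lead C) = C" if CC: "C \<in> cls" for C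
  proof -
    obtain c where c: "c < n" "C = cyc_class q n c" using CC cls_eq by auto
    have "lead C \<in> C" using assms(6) CC cls_def by auto
    then show ?thesis using c mem_class class_lt by auto
  qed
  have cardC: "card C = per (lead C)" if "C \<in> cls" for C
    using leadC[OF that] card_class by metis
  have decomp: "supp_card n h = (\<Sum>C\<in>cls. \<Sum>i\<in>C. if h i \<noteq> 0 then 1 else (0::nat))"
    for h :: "nat \<Rightarrow> 'a"
  proof -
    have U: "\<Union>cls = {..<n}"
    proof
      show "\<Union>cls \<subseteq> {..<n}" using cls_eq class_lt by auto
      show "{..<n} \<subseteq> \<Union>cls"
      proof
        fix i assume "i \<in> {..<n}"
        then have "i \<in> cyc_class q n i" "cyc_class q n i \<in> cls" using self_in cls_eq by auto
        then show "i \<in> \<Union>cls" by blast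
      qed
    qed
    have disj: "\<forall>A\<in>cls. \<forall>B\<in>cls. A \<noteq> B \<longrightarrow> A \<inter> B = {}"
    proof (intro ballI impI)
      fix A B assume AB: "A \<in> cls" "B \<in> cls" "A \<noteq> B"
      show "A \<inter> B = {}"
      proof (rule ccontr)
        assume "A \<inter> B \<noteq> {}"
        then obtain x where x: "x \<in> A" "x \<in> B" by blast
        obtain a b where ab: "A = cyc_class q n a" "B = cyc_class q n b" using AB cls_eq by auto
        have "cyc_class q n x = A" using x(1) mem_class ab(1) by simp
        moreover have "cyc_class q n x = B" using x(2) mem_class ab(2) by simp
        ultimately show False using AB by simp
      qed
    qed
    have fin: "\<forall>A\<in>cls. finite A" using cls_eq by (auto simp: class_eq)
    have "supp_card n h = (\<Sum>i<n. if h i \<noteq> 0 then 1 else (0::nat))"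
      by (simp add: supp_card_def count_if)
    also have "\<dots> = (\<Sum>i\<in>\<Union>cls. if h i \<noteq> 0 then 1 else (0::nat))" using U by simp
    also have "\<dots> = (\<Sum>C\<in>cls. \<Sum>i\<in>C. if h i \<noteq> 0 then 1 else (0::nat))"
      using sum.Union_disjoint[OF fin disj] by simp
    finally show ?thesis .
  qed
  define R where "R C = Max ((\<lambda>b. card {t. t < card C \<and> xCt q m n g (lead C) t = b}) ` subfield_GF q (card C))" for C
  have finsub: "finite (subfield_GF q k :: 'a set)" for k by simp
  have zsub: "(0::'a) \<in> subfield_GF q k" for k using q1 by (simp add: subfield_GF_def)
  have cls_val: "supp_card n (\<lambda>i. g i - f i) = (\<Sum>C\<in>cls. card C - card {t. t < card C \<and> xCt q m n g (lead C) t = f (lead C)})"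
    if fs: "\<forall>C\<in>cls. \<forall>t. f (s (lead C) t) = f (lead C) ^ (q ^ t)" for f
  proof -
    have "supp_card n (\<lambda>i. g i - f i) = (\<Sum>C\<in>cls. \<Sum>i\<in>C. if g i - f i \<noteq> 0 then 1 else (0::nat))"
      using decomp by simp
    also have "\<dots> = (\<Sum>C\<in>cls. card C - card {t. t < card C \<and> xCt q m n g (lead C) t = f (lead C)})"
    proof (rule sum.cong[OF refl])
      fix C assume C: "C \<in> cls"
      have "(\<Sum>i\<in>C. if g i - f i \<noteq> 0 then 1 else (0::nat))
          = (\<Sum>i\<in>cyc_class q n (lead C). if g i - f i \<noteq> 0 then 1 else (0::nat))"
        using leadC[OF C] by simp
      also have "\<dots> = per (lead C) - card {t. t < per (lead C) \<and> xCt q m n g (lead C) t = f (lead C)}"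
        by (rule class_sum[OF frob]) (use fs C in blast)
      finally show "(\<Sum>i\<in>C. if g i - f i \<noteq> 0 then 1 else (0::nat))
          = card C - card {t. t < card C \<and> xCt q m n g (lead C) t = f (lead C)}"
        using cardC[OF C] by simp
    qed
    finally show ?thesis .
  qed
  have lower: "(\<Sum>C\<in>cls. card C - R C) \<le> supp_card n (\<lambda>i. g i - f i)" if f: "f \<in> Fn q n" for f
  proof -
    have fs: "\<forall>C\<in>cls. \<forall>t. f (s (lead C) t) = f (lead C) ^ (q ^ t)"
      using Fn_s[OF f] leadC by blast
    have "(\<Sum>C\<in>cls. card C - R C) \<le> (\<Sum>C\<in>cls. card C - card {t. t < card C \<and> xCt q m n g (lead C) t = f (lead C)})"
    proof (rule sum_mono)
      fix C assume C: "C \<in> cls"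
      have "f (lead C) \<in> subfield_GF q (card C)" using Fn_sub[OF f] leadC[OF C] cardC[OF C] by simp
      then have "card {t. t < card C \<and> xCt q m n g (lead C) t = f (lead C)} \<le> R C"
        unfolding R_def by (intro Max_ge) (auto intro: finite_imageI)
      then show "card C - R C \<le> card C - card {t. t < card C \<and> xCt q m n g (lead C) t = f (lead C)}"
        by simp
    qed
    also have "\<dots> = supp_card n (\<lambda>i. g i - f i)" using cls_val[OF fs] by simp
    finally show ?thesis .
  qed
  have "\<forall>C\<in>cls. \<exists>b. b \<in> subfield_GF q (card C) \<and> card {t. t < card C \<and> xCt q m n g (lead C) t = b} = R C"
  proof
    fix C assume C: "C \<in> cls"
    have "R C \<in> (\<lambda>b. card {t. t < card C \<and> xCt q m n g (lead C) t = b}) ` subfield_GF q (card C)"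
      unfolding R_def using zsub by (intro Max_in) auto
    then show "\<exists>b. b \<in> subfield_GF q (card C) \<and> card {t. t < card C \<and> xCt q m n g (lead C) t = b} = R C"
      by auto
  qed
  then obtain b where b: "\<And>C. C \<in> cls \<Longrightarrow> b C \<in> subfield_GF q (card C) \<and> card {t. t < card C \<and> xCt q m n g (lead C) t = b C} = R C"
    by metis
  define fs where "fs i = (if i < n then b (cyc_class q n i) ^ (q ^ (LEAST j. s (lead (cyc_class q n i)) j = i)) else 0)" for i
  have fs_on: "fs (s (lead C) t) = b C ^ (q ^ t)" if C: "C \<in> cls" for C t
  proof -
    define c where "c = lead C"
    have c: "c < n" "cyc_class q n c = C" using leadC[OF C] by (auto simp: c_def)
    define i where "i = s c t"
    have i: "i < n" by (simp add: i_def s_lt)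
    have "i \<in> cyc_class q n c" using class_eq[of c] s_mod[of c t] per(1)[of c] by (auto simp: i_def)
    then have ci: "cyc_class q n i = C" using mem_class[of i c] c by simp
    define j where "j = (LEAST j. s c j = i)"
    have sj: "s c j = i" unfolding j_def by (rule LeastI[of _ t]) (simp add: i_def)
    then have jt: "j mod per c = t mod per c" using s_eq_iff by (simp add: i_def)
    have bk: "b C ^ (q ^ per c) = b C" using b[OF C] cardC[OF C] by (simp add: subfield_GF_def c_def)
    have bmod: "b C ^ (q ^ a) = b C ^ (q ^ (a mod per c))" for a
    proof -
      have bkm: "b C ^ (q ^ (per c * d)) = b C" for d
      proof (induction d)
        case 0 then show ?case by simp
      next
        case (Suc d)
        have "b C ^ (q ^ (per c * Suc d)) = (b C ^ (q ^ (per c * d))) ^ (q ^ per c)"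
        proof -
          have "per c * Suc d = per c * d + per c" by simp
          then show ?thesis by (simp only: power_add power_mult)
        qed
        then show ?case using Suc bk by simp
      qed
      have "a = per c * (a div per c) + a mod per c" by simp
      then have "b C ^ (q ^ a) = (b C ^ (q ^ (per c * (a div per c)))) ^ (q ^ (a mod per c))"
        by (metis power_add power_mult)
      then show ?thesis using bkm by simp
    qed
    have "fs i = b C ^ (q ^ j)" using i ci by (simp add: fs_def j_def c_def)
    also have "\<dots> = b C ^ (q ^ t)" using bmod[of j] bmod[of t] jt by simp
    finally show ?thesis by (simp add: i_def c_def)
  qed
  have fsFn: "fs \<in> Fn q n"
    unfolding Fn_def
  proof (intro CollectI conjI allI impI)
    fix i assume i: "i \<ge> n" then show "fs i = 0" by (simp add: fs_def)
  next
    fix i assume i: "i < n"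
    define C where "C = cyc_class q n i"
    have C: "C \<in> cls" using i cls_eq by (auto simp: C_def)
    have "i \<in> cyc_class q n (lead C)" using leadC[OF C] self_in[OF i] by (simp add: C_def)
    then obtain t where t: "i = s (lead C) t" by (auto simp: cyc_class_def s_def)
    have "(q * i) mod n = s (lead C) (Suc t)" using t s_Suc by simp
    then have "fs ((q * i) mod n) = b C ^ (q ^ Suc t)" using fs_on[OF C] by simp
    also have "\<dots> = (b C ^ (q ^ t)) ^ q" by (simp only: power_Suc mult.commute[of q] power_mult)
    also have "\<dots> = fs i ^ q" using fs_on[OF C] t by simp
    finally show "fs ((q * i) mod n) = fs i ^ q" .
  qed
  have fs_lead: "fs (lead C) = b C" if C: "C \<in> cls" for C
    using fs_on[OF C, of 0] s_0 leadC[OF C] by simp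
  have fsval: "supp_card n (\<lambda>i. g i - fs i) = (\<Sum>C\<in>cls. card C - R C)"
  proof -
    have fsx: "\<forall>C\<in>cls. \<forall>t. fs (s (lead C) t) = fs (lead C) ^ (q ^ t)"
      using fs_on fs_lead by simp
    show ?thesis using cls_val[OF fsx] fs_lead b by simp
  qed
  define V where "V = (\<lambda>f. supp_card n (\<lambda>i. g i - f i)) ` Fn q n"
  have finV: "finite V"
  proof (rule finite_subset)
    show "V \<subseteq> {..n}" by (auto simp: V_def supp_card_def intro!: card_mono[of "{..<n}", simplified])
  qed simp
  have "Min V \<le> (\<Sum>C\<in>cls. card C - R C)"
  proof -
    have "(\<Sum>C\<in>cls. card C - R C) \<in> V" unfolding V_def
      using fsval fsFn by (metis (no_types, lifting) image_eqI)
    then show ?thesis using finV by (rule Min_le[rotated])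
  qed
  moreover have "(\<Sum>C\<in>cls. card C - R C) \<le> Min V"
    using finV fsFn lower by (subst Min_ge_iff) (auto simp: V_def)
  ultimately have "Min V = (\<Sum>C\<in>cls. card C - R C)" by simp
  then show ?thesis by (simp add: V_def R_def cls_def)
qed

end
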